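(* Let $q$ be a prime power, $n\ge1$, $P=\sum_{s=0}^m a_s\theta^s\in\mathbb F_q[\theta]$ nonzero, where $m\ge\deg P$ is an integer with $(q-1)\mid(m+n)$, and put $\iota(P)=\sum_{i=0}^m a_{m-i}\theta^i$ and $k=\frac{m+n}{q-1}-1$, assumed $\ge1$. For a polynomial $R=\sum_s b_s\theta^s$ let $\mathfrak M(R,T,n,k)\in M_{k\times k}(\mathbb F_q[T])$ have entries $\mathfrak M(R,T,n,k)_{i,j}=\sum_{l=0}^nT^{n-l}(-1)^l\binom nl b_{iq-j-l}$ ($1\le i,j\le k$, $b_s=0$ for $s<0$ or $s>m$). Let $W_3=\sum_{i=1}^k\varepsilon_{i,k+1-i}$ be the $k\times k$ matrix with ones on the antidiagonal and zeros elsewhere. Then $$W_3\,\mathfrak M(P,T,n,k)\,W_3^{-1}=(-T)^n\,\mathfrak M(\iota(P),T^{-1},n,k).$$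
   Context: $\varepsilon_{ij}$ denotes the elementary matrix with $1$ in position $(i,j)$ and $0$ elsewhere. $\mathfrak M(\iota(P),T^{-1},n,k)$ means $\mathfrak M(\iota(P),T,n,k)$ with $T$ replaced by $T^{-1}$. Binomial coefficients are read in $\mathbb F_q$. *)

theory Defs
  imports "HOL-Computational_Algebra.Polynomial" "HOL-Computational_Algebra.Fraction_Field" "HOL-Computational_Algebra.Polynomial_Factorial"
    "Jordan_Normal_Form.Gauss_Jordan_Elimination"
begin

definition bcoef :: "nat \<Rightarrow> 'a::zero poly \<Rightarrow> int \<Rightarrow> 'a" where
  "bcoef m R s = (if s < 0 \<or> s > int m then 0 else coeff R (nat s))"

definition iota :: "nat \<Rightarrow> 'a::comm_ring_1 poly \<Rightarrow> 'a poly" where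
  "iota m P = (\<Sum>i\<le>m. monom (coeff P (m - i)) i)"

definition Tvar :: "'a::field poly fract" where
  "Tvar = to_fract [:0, 1:]"

text \<open>The k x k matrix frak M(R, t, n, k) with 1-based indices i,j shifted to 0-based;
  q = card (UNIV :: 'a set). Entries live in F_q(T) so that t may be T or T^{-1}.\<close>
definition frakM :: "nat \<Rightarrow> 'a::{field,finite} poly \<Rightarrow> 'a poly fract \<Rightarrow> nat \<Rightarrow> nat \<Rightarrow> 'a poly fract mat" where
  "frakM m R t n k = mat k k (\<lambda>(i, j).
     \<Sum>l\<le>n. t ^ (n - l) * (-1) ^ l * to_fract [: of_nat (n choose l) :]
        * to_fract [: bcoef m R (int ((i + 1) * card (UNIV :: 'a set)) - int (j + 1) - int l) :])"

definition W3 :: "nat \<Rightarrow> 'a::field poly fract mat" where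
  "W3 k = mat k k (\<lambda>(i, j). if i + j = k - 1 then 1 else 0)"

end

theory Submission
  imports Defs
begin

lemma W3_carrier: "W3 k \<in> carrier_mat k k"
  by (simp add: W3_def)

lemma W3_left:
  assumes A: "A \<in> carrier_mat k n" and i: "i < k" and j: "j < n"
  shows "(W3 k * A) $$ (i, j) = A $$ (k - 1 - i, j)"
proof -
  have "(W3 k * A) $$ (i, j) = (\<Sum>l<k. (if i + l = k - 1 then 1 else 0) * A $$ (l, j))"
    using A i j by (simp add: W3_def scalar_prod_def atLeast0LessThan)
  also have "\<dots> = (\<Sum>l\<in>{k - 1 - i}. A $$ (l, j))"
    using i by (intro sum.mono_neutral_cong_right) auto
  finally show ?thesis by simp
qed

lemma W3_right:
  assumes A: "A \<in> carrier_mat n k" and i: "i < n" and j: "j < k"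
  shows "(A * W3 k) $$ (i, j) = A $$ (i, k - 1 - j)"
proof -
  have "(A * W3 k) $$ (i, j) = (\<Sum>l<k. A $$ (i, l) * (if l + j = k - 1 then 1 else 0))"
    using A i j by (simp add: W3_def scalar_prod_def atLeast0LessThan)
  also have "\<dots> = (\<Sum>l\<in>{k - 1 - j}. A $$ (i, l))"
    using j by (intro sum.mono_neutral_cong_right) auto
  finally show ?thesis by simp
qed

lemma W3_sq: "W3 k * W3 k = (1\<^sub>m k :: 'a::field poly fract mat)"
proof (rule eq_matI)
  fix i j assume ij: "i < dim_row (1\<^sub>m k :: 'a poly fract mat)" "j < dim_col (1\<^sub>m k :: 'a poly fract mat)"
  hence "i < k" "j < k" by auto
  thus "(W3 k * W3 k) $$ (i, j) = (1\<^sub>m k :: 'a poly fract mat) $$ (i, j)"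
    by (subst W3_left[OF W3_carrier]) (auto simp: W3_def)
qed (auto simp: W3_def)

lemma W3_inv: "mat_inverse (W3 k :: 'a::field poly fract mat) = Some (W3 k)"
proof (cases "mat_inverse (W3 k :: 'a poly fract mat)")
  case None
  from mat_inverse(1)[OF W3_carrier None, of undefined] show ?thesis
    using W3_sq[where 'a='a] W3_carrier[of k]
    by (auto simp: Units_def ring_mat_def)
next
  case (Some B)
  from mat_inverse(2)[OF W3_carrier Some] have
    B: "W3 k * B = 1\<^sub>m k" "B \<in> carrier_mat k k" by auto
  have "B = (W3 k * W3 k) * B" using B by (simp add: W3_sq)
  also have "\<dots> = W3 k * (W3 k * B)" using B W3_carrier by (metis assoc_mult_mat)
  also have "\<dots> = W3 k" using B W3_carrier right_mult_one_mat by metis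
  finally show ?thesis using Some by simp
qed

lemma coeff_iota: "coeff (iota m P) s = (if s \<le> m then coeff P (m - s) else 0)"
  by (simp add: iota_def coeff_sum coeff_monom)

lemma bcoef_iota:
  "bcoef m (iota m P) s = bcoef m P (int m - s)"
proof -
  have "bcoef m (iota m P) s = (if s < 0 \<or> s > int m then 0 else coeff P (m - nat s))"
    by (auto simp: bcoef_def coeff_iota)
  also have "\<dots> = bcoef m P (int m - s)"
    by (auto simp: bcoef_def nat_diff_distrib)
  finally show ?thesis .
qed

lemma Tvar_nz: "(Tvar :: 'a::field poly fract) \<noteq> 0"
  by (simp add: Tvar_def)

theorem proposition5p3:
  fixes P :: "'a::{field,finite} poly" and m n k :: nat
  assumes "n \<ge> 1"
    and "P \<noteq> 0"
    and "degree P \<le> m"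
    and "(card (UNIV :: 'a set) - 1) dvd (m + n)"
    and "k = (m + n) div (card (UNIV :: 'a set) - 1) - 1"
    and "k \<ge> 1"
  shows "W3 k * frakM m P Tvar n k * the (mat_inverse (W3 k))
         = ((- Tvar) ^ n) \<cdot>\<^sub>m frakM m (iota m P) (inverse Tvar) n k"
proof -
  define q where "q = card (UNIV :: 'a set)"
  have q2: "q \<ge> 2"
  proof -
    have "{0::'a, 1} \<subseteq> UNIV" by auto
    hence "card {0::'a, 1} \<le> q" unfolding q_def by (intro card_mono) auto
    thus ?thesis by simp
  qed
  have kq: "int (k + 1) * (int q - 1) = int (m + n)"
  proof -
    from assms(4) obtain c where c: "m + n = (q - 1) * c" unfolding q_def by auto
    have "c \<ge> 2" using assms(5,6) c q2 unfolding q_def[symmetric] by auto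
    hence "k + 1 = c" using assms(5) c q2 unfolding q_def[symmetric] by auto
    thus ?thesis using c q2 by (simp add: of_nat_diff algebra_simps)
  qed
  have MC: "frakM m P Tvar n k \<in> carrier_mat k k" by (simp add: frakM_def)
  show ?thesis
  proof (rule eq_matI)
    fix i j assume "i < dim_row ((- Tvar) ^ n \<cdot>\<^sub>m frakM m (iota m P) (inverse Tvar) n k)"
      "j < dim_col ((- Tvar) ^ n \<cdot>\<^sub>m frakM m (iota m P) (inverse Tvar) n k)"
    hence i: "i < k" and j: "j < k" by (auto simp: frakM_def)
    have L: "(W3 k * frakM m P Tvar n k * the (mat_inverse (W3 k))) $$ (i, j)
       = frakM m P Tvar n k $$ (k - 1 - i, k - 1 - j)"
    proof -
      have WM: "W3 k * frakM m P Tvar n k \<in> carrier_mat k k" using MC W3_carrier[of k] by (metis mult_carrier_mat)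
      have "(W3 k * frakM m P Tvar n k * W3 k) $$ (i, j) = (W3 k * frakM m P Tvar n k) $$ (i, k - 1 - j)"
        by (rule W3_right[OF WM i j])
      also have "\<dots> = frakM m P Tvar n k $$ (k - 1 - i, k - 1 - j)"
        by (rule W3_left[OF MC i]) (use j in auto)
      finally show ?thesis by (simp add: W3_inv)
    qed
    define T where "T = (Tvar :: 'a poly fract)"
    define C where "C = (\<lambda>l. to_fract [: of_nat (n choose l) :] :: 'a poly fract)"
    define B where "B = (\<lambda>s. to_fract [: bcoef m P s :] :: 'a poly fract)"
    have TT: "T \<noteq> 0" by (simp add: T_def Tvar_nz)
    have LHS: "frakM m P Tvar n k $$ (k - 1 - i, k - 1 - j)
      = (\<Sum>l\<le>n. T ^ (n - l) * (-1) ^ l * C l * B (int (m + n) - int ((i+1) * q) + int (j + 1) - int l))"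
    proof -
      have "int ((k - 1 - i + 1) * q) - int (k - 1 - j + 1) = int (k + 1) * (int q - 1) - int ((i+1) * q) + int (j + 1)"
      proof -
        have e: "k - 1 - i + 1 = k - i" "k - 1 - j + 1 = k - j" using i j by auto
        have "int ((k - i) * q) = (int k - int i) * int q" using i by (simp add: of_nat_diff)
        moreover have "int (k - j) = int k - int j" using j by simp
        ultimately show ?thesis unfolding e by (simp add: algebra_simps)
      qed
      hence eq: "\<And>l. int ((k - 1 - i + 1) * q) - int (k - 1 - j + 1) - int l = int (m + n) - int ((i+1) * q) + int (j + 1) - int l"
        unfolding kq by simp
      have "frakM m P Tvar n k $$ (k - 1 - i, k - 1 - j)
        = (\<Sum>l\<le>n. T ^ (n - l) * (-1) ^ l * C l * B (int ((k - 1 - i + 1) * q) - int (k - 1 - j + 1) - int l))"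
        using i j by (simp add: frakM_def T_def C_def B_def q_def)
      also have "\<dots> = (\<Sum>l\<le>n. T ^ (n - l) * (-1) ^ l * C l * B (int (m + n) - int ((i+1) * q) + int (j + 1) - int l))"
        by (rule sum.cong[OF refl]) (simp only: eq)
      finally show ?thesis .
    qed
    have RHS: "((- Tvar) ^ n \<cdot>\<^sub>m frakM m (iota m P) (inverse Tvar) n k) $$ (i, j)
      = (- T) ^ n * (\<Sum>l\<le>n. inverse T ^ (n - l) * (-1) ^ l * C l * B (int m - (int ((i + 1) * q) - int (j + 1) - int l)))"
      using i j by (simp add: frakM_def T_def C_def B_def q_def bcoef_iota)
    also have "\<dots> = (- T) ^ n * (\<Sum>l\<le>n. inverse T ^ l * (-1) ^ (n - l) * C (n - l) * B (int m - (int ((i + 1) * q) - int (j + 1) - int (n - l))))"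
      by (intro arg_cong[where f="\<lambda>x. (- T) ^ n * x"] sum.reindex_bij_witness[of _ "\<lambda>l. n - l" "\<lambda>l. n - l"]) auto
    also have "\<dots> = (\<Sum>l\<le>n. T ^ (n - l) * (-1) ^ l * C l * B (int (m + n) - int ((i+1) * q) + int (j + 1) - int l))"
      unfolding sum_distrib_left
    proof (intro sum.cong refl)
      fix l assume l: "l \<in> {..n}"
      hence ln: "l \<le> n" by simp
      have c: "C (n - l) = C l" unfolding C_def using ln by (simp add: binomial_symmetric[OF ln, symmetric])
      have b: "int m - (int ((i + 1) * q) - int (j + 1) - int (n - l)) = int (m + n) - int ((i+1) * q) + int (j + 1) - int l"
        using ln by (simp add: of_nat_diff)
      have t: "(- T) ^ n * inverse T ^ l = (-1) ^ n * T ^ (n - l)"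
      proof -
        have tl: "T ^ l \<noteq> 0" using TT by simp
        have a: "T ^ n = T ^ (n - l) * T ^ l" using ln by (metis le_add_diff_inverse2 power_add)
        have b: "inverse T ^ l = inverse (T ^ l)" by (rule power_inverse)
        have "(- T) ^ n * inverse T ^ l = (-1) ^ n * (T ^ (n - l) * (T ^ l * inverse (T ^ l)))"
          unfolding power_minus[of T n] a b by (simp only: mult.assoc)
        also have "\<dots> = (-1) ^ n * T ^ (n - l)" using tl by simp
        finally show ?thesis .
      qed
      have s: "(-1::'a poly fract) ^ n * (-1) ^ (n - l) = (-1) ^ l"
      proof -
        have "(-1::'a poly fract) ^ n * (-1) ^ (n - l) = (-1) ^ (l + 2 * (n - l))"
        proof -
          have "n + (n - l) = l + 2 * (n - l)" using ln by simp
          thus ?thesis by (simp only: power_add[symmetric])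
        qed
        thus ?thesis by (simp add: power_add power_mult)
      qed
      have "(- T) ^ n * (inverse T ^ l * (-1) ^ (n - l) * C (n - l) * B (int m - (int ((i + 1) * q) - int (j + 1) - int (n - l))))
          = ((- T) ^ n * inverse T ^ l) * (-1) ^ (n - l) * C l * B (int (m + n) - int ((i+1) * q) + int (j + 1) - int l)"
        unfolding c b by (simp only: mult.assoc)
      also have "\<dots> = T ^ (n - l) * ((-1) ^ n * (-1) ^ (n - l)) * C l * B (int (m + n) - int ((i+1) * q) + int (j + 1) - int l)"
        unfolding t by (simp only: mult_ac)
      finally show "(- T) ^ n * (inverse T ^ l * (-1) ^ (n - l) * C (n - l) * B (int m - (int ((i + 1) * q) - int (j + 1) - int (n - l))))
          = T ^ (n - l) * (-1) ^ l * C l * B (int (m + n) - int ((i+1) * q) + int (j + 1) - int l)"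
        by (simp add: s)
    qed
    finally show "(W3 k * frakM m P Tvar n k * the (mat_inverse (W3 k))) $$ (i, j)
      = ((- Tvar) ^ n \<cdot>\<^sub>m frakM m (iota m P) (inverse Tvar) n k) $$ (i, j)"
      using L LHS by simp
  qed (auto simp: frakM_def W3_inv, simp_all add: W3_def)
qed

end
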